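(* Let $G$ be a finite set with $n=\#G\ge 1$ elements and let $s:G\to G$ be a translation on $G$. Then there exists a quasigroup operation $*$ on $G$ for which $s$ is an automorphism (i.e. $s(x*y)=s(x)*s(y)$ for all $x,y\in G$) if and only if $n$ is odd.
   Context: A binary operation $*$ on a set $G$ is a quasigroup operation if it is left and right cancelable: $x*y=x*z\Rightarrow y=z$ and $y*x=z*x\Rightarrow y=z$ for all $x,y,z\in G$. For a finite set $G$, a map $s:G\to G$ is called a translation on $G$ if for every $x\in G$ one has $G=\{s^k(x): k=0,1,\ldots,\#G-1\}$ (equivalently, $s$ is a cyclic permutation of $G$ of length $\#G$). *)

theory Defs
  imports Main
begin

definition quasigroup_op :: "'a set \<Rightarrow> ('a \<Rightarrow> 'a \<Rightarrow> 'a) \<Rightarrow> bool" where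
  "quasigroup_op G f \<longleftrightarrow>
     (\<forall>x\<in>G. \<forall>y\<in>G. f x y \<in> G) \<and>
     (\<forall>x\<in>G. \<forall>y\<in>G. \<forall>z\<in>G. f x y = f x z \<longrightarrow> y = z) \<and>
     (\<forall>x\<in>G. \<forall>y\<in>G. \<forall>z\<in>G. f y x = f z x \<longrightarrow> y = z)"

definition translation :: "'a set \<Rightarrow> ('a \<Rightarrow> 'a) \<Rightarrow> bool" where
  "translation G s \<longleftrightarrow>
     (\<forall>x\<in>G. s x \<in> G) \<and>
     (\<forall>x\<in>G. G = {(s ^^ k) x | k. k < card G})"

end

theory Submission
  imports Defs
begin

locale cyc =
  fixes G :: "'a set" and s :: "'a \<Rightarrow> 'a" and x0 :: 'a and n :: nat
  assumes fin: "finite G" and x0G: "x0 \<in> G" and ndef: "n = card G" and tr: "translation G s"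
begin

definition phi :: "nat \<Rightarrow> 'a" where "phi k = (s ^^ k) x0"

lemma sG: "x \<in> G \<Longrightarrow> s x \<in> G"
  using tr unfolding translation_def by auto

lemma phiG: "phi k \<in> G"
  by (induction k) (auto simp: phi_def x0G sG)

lemma npos: "n > 0"
  using fin x0G ndef card_gt_0_iff by blast

lemma phi_Suc: "phi (Suc k) = s (phi k)"
  by (simp add: phi_def)

lemma img: "G = phi ` {..<n}"
proof -
  have "G = {(s ^^ k) x0 | k. k < card G}" using tr x0G unfolding translation_def by blast
  thus ?thesis by (auto simp: phi_def ndef)
qed

lemma inj: "inj_on phi {..<n}"
proof -
  have "card (phi ` {..<n}) = card {..<n}" using img ndef by simp
  thus ?thesis by (rule eq_card_imp_inj_on[rotated]) simp
qed

lemma phi_n: "phi n = x0"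
proof -
  have "G = {(s ^^ k) (s x0) | k. k < card G}" using tr x0G sG unfolding translation_def by blast
  hence "x0 \<in> {(s ^^ k) (s x0) | k. k < n}" using x0G ndef by simp
  then obtain k where k: "k < n" "x0 = (s ^^ k) (s x0)" by blast
  have "(s ^^ k) (s x0) = phi (Suc k)" by (simp add: phi_def funpow_swap1)
  with k have e: "phi 0 = phi (Suc k)" by (simp add: phi_def)
  show ?thesis
  proof (cases "Suc k < n")
    case True
    with e inj have "0 = Suc k" by (auto dest: inj_onD[where x=0 and y="Suc k"] simp: npos)
    thus ?thesis by simp
  next
    case False
    with k have "Suc k = n" by simp
    with e show ?thesis by (simp add: phi_def)
  qed
qed

lemma phi_add_n: "phi (k + n) = phi k"
  by (simp add: phi_def funpow_add phi_n[unfolded phi_def])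

lemma phi_mod: "phi (a mod n) = phi a"
proof (induction a rule: less_induct)
  case (less a)
  show ?case
  proof (cases "a < n")
    case True thus ?thesis by simp
  next
    case False
    then obtain b where b: "a = b + n" by (metis add.commute le_add_diff_inverse not_less)
    have "b < a" using b npos by simp
    then have "phi (b mod n) = phi b" using less by blast
    thus ?thesis using b phi_add_n by simp
  qed
qed

lemma phi_eq: "phi a = phi b \<longleftrightarrow> a mod n = b mod n"
proof
  assume "phi a = phi b"
  hence "phi (a mod n) = phi (b mod n)" by (simp add: phi_mod)
  thus "a mod n = b mod n" using inj npos by (auto dest: inj_onD)
next
  assume "a mod n = b mod n"
  thus "phi a = phi b" by (metis phi_mod)
qed

definition ix :: "'a \<Rightarrow> nat" where "ix y = (SOME k. k < n \<and> phi k = y)"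

lemma ix: "y \<in> G \<Longrightarrow> ix y < n \<and> phi (ix y) = y"
proof -
  assume "y \<in> G"
  then have "\<exists>k. k < n \<and> phi k = y" using img by auto
  thus ?thesis unfolding ix_def by (rule someI_ex)
qed

lemma spow_phi: "(s ^^ a) (phi k) = phi (a + k)"
  by (simp add: phi_def funpow_add)

end

lemma auto_pow:
  assumes "\<forall>x\<in>G. \<forall>y\<in>G. s (f x y) = f (s x) (s y)" "\<forall>x\<in>G. s x \<in> G"
    "\<forall>x\<in>G. \<forall>y\<in>G. f x y \<in> G" "x \<in> G" "y \<in> G"
  shows "(s ^^ a) (f x y) = f ((s ^^ a) x) ((s ^^ a) y)"
proof -
  have "(s ^^ a) x \<in> G \<and> (s ^^ a) y \<in> G \<and> (s ^^ a) (f x y) = f ((s ^^ a) x) ((s ^^ a) y)"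
    by (induction a) (use assms in auto)
  thus ?thesis by simp
qed

lemma sum_perm:
  assumes "inj_on g {..<n::nat}" "\<forall>d<n. g d < n"
  shows "(\<Sum>d<n. g d) = (\<Sum>d<n. d)"
proof -
  have "g ` {..<n} = {..<n}" using assms by (intro endo_inj_surj) auto
  hence "(\<Sum>d<n. d) = sum id (g ` {..<n})" by simp
  also have "\<dots> = (\<Sum>d<n. g d)" using assms(1) by (simp add: sum.reindex)
  finally show ?thesis by simp
qed

lemma gauss2: "2 * (\<Sum>d<n. d) = n * (n - 1::nat)"
proof (induction n)
  case (Suc n)
  thus ?case by (cases n) (auto simp: algebra_simps)
qed simp


context cyc begin

lemma ix_s: "x \<in> G \<Longrightarrow> ix (s x) mod n = Suc (ix x) mod n"
proof -
  assume x: "x \<in> G"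
  have "phi (ix (s x)) = s x" using ix sG x by blast
  also have "\<dots> = phi (Suc (ix x))" using ix x by (simp add: phi_Suc)
  finally show ?thesis by (simp add: phi_eq)
qed

lemma odd_dir:
  assumes "odd n"
  shows "\<exists>f. quasigroup_op G f \<and> (\<forall>x\<in>G. \<forall>y\<in>G. s (f x y) = f (s x) (s y))"
proof -
  define h where "h = (n + 1) div 2"
  have h2: "2 * h = n + 1" using assms unfolding h_def by simp
  define f where "f x y = phi (h * (ix x + ix y))" for x y
  have canc: "a mod n = b mod n" if "(h * a) mod n = (h * b) mod n" for a b
  proof -
    have "(2 * (h * a)) mod n = (2 * (h * b)) mod n" using that by (metis mod_mult_right_eq)
    hence "((n + 1) * a) mod n = ((n + 1) * b) mod n" by (simp add: h2 mult.assoc[symmetric])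
    thus ?thesis by (simp add: algebra_simps)
  qed
  have q: "quasigroup_op G f"
    unfolding quasigroup_op_def
  proof (intro conjI ballI impI)
    fix x y show "f x y \<in> G" by (simp add: f_def phiG)
  next
    fix x y z assume xyz: "x \<in> G" "y \<in> G" "z \<in> G" and "f x y = f x z"
    hence "(ix x + ix y) mod n = (ix x + ix z) mod n" by (auto simp: f_def phi_eq intro: canc)
    hence "ix y mod n = ix z mod n" by (simp add: nat_mod_eq_iff)
    thus "y = z" using ix xyz phi_eq by metis
  next
    fix x y z assume xyz: "x \<in> G" "y \<in> G" "z \<in> G" and "f y x = f z x"
    hence "(ix y + ix x) mod n = (ix z + ix x) mod n" by (auto simp: f_def phi_eq intro: canc)
    hence "ix y mod n = ix z mod n" by (simp add: nat_mod_eq_iff)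
    thus "y = z" using ix xyz phi_eq by metis
  qed
  have "s (f x y) = f (s x) (s y)" if "x \<in> G" "y \<in> G" for x y
  proof -
    have "(ix (s x) + ix (s y)) mod n = (Suc (ix x) + Suc (ix y)) mod n"
      using ix_s that by (metis mod_add_cong)
    hence "(h * (ix (s x) + ix (s y))) mod n = (h * (Suc (ix x) + Suc (ix y))) mod n"
      by (metis mod_mult_right_eq)
    also have "h * (Suc (ix x) + Suc (ix y)) = h * (ix x + ix y) + n + 1"
      using h2 by (simp add: algebra_simps)
    also have "(h * (ix x + ix y) + n + 1) mod n = Suc (h * (ix x + ix y)) mod n"
      by (metis add.commute add.left_commute mod_add_self1 plus_1_eq_Suc)
    finally show ?thesis by (simp add: f_def phi_Suc[symmetric] phi_eq)
  qed
  thus ?thesis using q by blast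
qed

end


context cyc begin

lemma even_dir:
  assumes q: "quasigroup_op G f" and aut: "\<forall>x\<in>G. \<forall>y\<in>G. s (f x y) = f (s x) (s y)"
  shows "odd n"
proof (rule ccontr)
  assume ev: "\<not> odd n"
  have cl: "\<forall>x\<in>G. \<forall>y\<in>G. f x y \<in> G" using q unfolding quasigroup_op_def by blast
  have lc: "\<And>x y z. x \<in> G \<Longrightarrow> y \<in> G \<Longrightarrow> z \<in> G \<Longrightarrow> f x y = f x z \<Longrightarrow> y = z"
    using q unfolding quasigroup_op_def by blast
  have rc: "\<And>x y z. x \<in> G \<Longrightarrow> y \<in> G \<Longrightarrow> z \<in> G \<Longrightarrow> f y x = f z x \<Longrightarrow> y = z"
    using q unfolding quasigroup_op_def by blast
  have sGall: "\<forall>x\<in>G. s x \<in> G" using sG by blast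
  define c where "c d = ix (f x0 (phi d))" for d
  have c: "c d < n \<and> phi (c d) = f x0 (phi d)" for d
    unfolding c_def using ix cl x0G phiG by blast
  have E1: "f (phi (n - d)) x0 = phi (n - d + c d)" if "d < n" for d
  proof -
    have "phi (n - d + c d) = (s ^^ (n - d)) (phi (c d))" by (simp add: spow_phi)
    also have "\<dots> = (s ^^ (n - d)) (f x0 (phi d))" using c by simp
    also have "\<dots> = f ((s ^^ (n - d)) x0) ((s ^^ (n - d)) (phi d))"
      using auto_pow[OF aut sGall cl x0G phiG] by blast
    also have "\<dots> = f (phi (n - d)) (phi n)" using that by (simp add: spow_phi phi_def[symmetric])
    finally show ?thesis using phi_n by simp
  qed
  have injc: "inj_on c {..<n}"
  proof (rule inj_onI)
    fix a b assume ab: "a \<in> {..<n}" "b \<in> {..<n}" "c a = c b"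
    hence "f x0 (phi a) = f x0 (phi b)" using c by metis
    hence "phi a = phi b" using lc x0G phiG by blast
    thus "a = b" using inj ab by (auto dest: inj_onD)
  qed
  define g where "g d = (n - d + c d) mod n" for d
  have injg: "inj_on g {..<n}"
  proof (rule inj_onI)
    fix a b assume ab: "a \<in> {..<n}" "b \<in> {..<n}" "g a = g b"
    hence "phi (n - a + c a) = phi (n - b + c b)" by (simp add: g_def phi_eq)
    hence "f (phi (n - a)) x0 = f (phi (n - b)) x0" using E1 ab by simp
    hence "phi (n - a) = phi (n - b)" using rc x0G phiG by blast
    hence m: "(n - a) mod n = (n - b) mod n" by (simp add: phi_eq)
    show "a = b"
    proof (cases "a = 0"; cases "b = 0")
      assume "a \<noteq> 0" "b \<noteq> 0" thus ?thesis using m ab by simp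
    next
      assume "a = 0" "b \<noteq> 0" thus ?thesis using m ab by simp
    next
      assume "a \<noteq> 0" "b = 0" thus ?thesis using m ab by simp
    qed simp
  qed
  have sc: "(\<Sum>d<n. c d) = (\<Sum>d<n. d)" using sum_perm[OF injc] c by blast
  have sg: "(\<Sum>d<n. g d) = (\<Sum>d<n. d)" using sum_perm[OF injg] npos by (simp add: g_def)
  have "(\<Sum>d<n. n - d + c d) + (\<Sum>d<n. d) = (\<Sum>d<n. n - d + c d + d)"
    by (rule sum.distrib[symmetric])
  also have "\<dots> = (\<Sum>d<n. n + c d)" by (intro sum.cong) auto
  also have "\<dots> = n * n + (\<Sum>d<n. d)" by (simp add: sum.distrib sc)
  finally have tot: "(\<Sum>d<n. n - d + c d) = n * n" by linarith
  have "(\<Sum>d<n. d) mod n = (\<Sum>d<n. n - d + c d) mod n"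
    using sg mod_sum_eq[of "\<lambda>d. n - d + c d" n "{..<n}"] by (simp add: g_def)
  hence z: "(\<Sum>d<n. d) mod n = 0" using tot by simp
  obtain m where m: "n = 2 * m" using ev by auto
  have "m > 0" using npos m by simp
  have "2 * (\<Sum>d<n. d) = 2 * (2 * m * (m - 1) + m)" using gauss2[of n] m \<open>m > 0\<close>
    by (cases m) (auto simp: algebra_simps)
  hence "(\<Sum>d<n. d) = n * (m - 1) + m" using m by simp
  hence "(\<Sum>d<n. d) mod n = m" using m \<open>m > 0\<close> by simp
  thus False using z \<open>m > 0\<close> by simp
qed

end

theorem lemma2p1:
  fixes G :: "'a set" and s :: "'a \<Rightarrow> 'a"
  assumes "finite G" and "card G \<ge> 1" and "translation G s"
  shows "(\<exists>f. quasigroup_op G f \<and> (\<forall>x\<in>G. \<forall>y\<in>G. s (f x y) = f (s x) (s y)))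
         \<longleftrightarrow> odd (card G)"
proof -
  obtain x0 where x0: "x0 \<in> G" using assms(2) by (metis card.empty ex_in_conv not_one_le_zero)
  interpret cyc G s x0 "card G" using assms x0 by unfold_locales auto
  show ?thesis using odd_dir even_dir by blast
qed

end
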